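(* Let $n\ge1$, $k\ge1$ be integers and $p$ a prime with $p\nmid n$. Then $$\Phi^*_{p^kn}(x)=\frac{\Phi^*_n(x^{p^k})}{\Phi^*_n(x)}.$$
   Context: $d\mid\mid n$ means $d\mid n$ and $\gcd(d,n/d)=1$; $(j,n)_*=\max\{d: d\mid j,\ d\mid\mid n\}$; $\Phi^*_n(x)=\prod_{1\le j\le n,\ (j,n)_*=1}(x-e^{2\pi i j/n})$. *)

theory Defs
  imports "HOL-Analysis.Analysis" "HOL-Computational_Algebra.Polynomial"
begin

definition unitary_dvd :: "nat \<Rightarrow> nat \<Rightarrow> bool" where
  "unitary_dvd d n \<longleftrightarrow> d dvd n \<and> coprime d (n div d)"

definition bi_unitary_gcd :: "nat \<Rightarrow> nat \<Rightarrow> nat" where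
  "bi_unitary_gcd j n = Max {d. d dvd j \<and> unitary_dvd d n}"

definition unitary_cyclotomic :: "nat \<Rightarrow> complex poly" where
  "unitary_cyclotomic n =
     (\<Prod>j\<in>{j. 1 \<le> j \<and> j \<le> n \<and> bi_unitary_gcd j n = 1}.
        [:- cis (2 * pi * real j / real n), 1:])"

end

theory Submission imports Defs begin

definition Pc :: "nat \<Rightarrow> nat \<Rightarrow> bool" where
  "Pc m j \<longleftrightarrow> (\<forall>d. d dvd j \<and> unitary_dvd d m \<longrightarrow> d = 1)"

lemma bug_iff:
  assumes m: "m > 0"
  shows "bi_unitary_gcd j m = 1 \<longleftrightarrow> Pc m j"
proof -
  let ?D = "{d. d dvd j \<and> unitary_dvd d m}"
  have fin: "finite ?D"
    by (rule finite_subset[of _ "{..m}"]) (auto simp: unitary_dvd_def intro: dvd_imp_le m)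
  have one: "1 \<in> ?D" by (simp add: unitary_dvd_def)
  have pos: "d > 0" if "d \<in> ?D" for d using that m by (auto simp: unitary_dvd_def intro: Nat.gr0I)
  have "Max ?D = 1 \<longleftrightarrow> (\<forall>d\<in>?D. d \<le> 1)"
  proof
    assume "Max ?D = 1"
    thus "\<forall>d\<in>?D. d \<le> 1" using Max_ge[OF fin] by metis
  next
    assume H: "\<forall>d\<in>?D. d \<le> 1"
    have "Max ?D \<le> 1" using H one fin by (subst Max_le_iff) auto
    moreover have "1 \<le> Max ?D" using Max_ge[OF fin one] .
    ultimately show "Max ?D = 1" by (rule antisym)
  qed
  also have "\<dots> \<longleftrightarrow> Pc m j" using pos unfolding Pc_def by (fastforce)
  finally show ?thesis by (simp add: bi_unitary_gcd_def)
qed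

lemma Pc_mod: "n > 0 \<Longrightarrow> Pc n (j mod n) \<longleftrightarrow> Pc n j"
  unfolding Pc_def unitary_dvd_def by (metis dvd_mod_iff)

lemma Pc_mult:
  assumes "coprime q n"
  shows "Pc n (q * j) \<longleftrightarrow> Pc n j"
proof -
  have "d dvd q * j \<longleftrightarrow> d dvd j" if "d dvd n" for d
  proof -
    have "coprime d q" using assms that by (metis coprime_commute coprime_mult_left_iff dvd_def)
    thus ?thesis by (simp add: coprime_dvd_mult_right_iff)
  qed
  thus ?thesis unfolding Pc_def unitary_dvd_def by blast
qed

lemma Pc_N:
  fixes n k p :: nat
  assumes n: "n \<ge> 1" and k: "k \<ge> 1" and p: "prime p" and pn: "\<not> p dvd n"
  shows "Pc (p ^ k * n) t \<longleftrightarrow> \<not> p ^ k dvd t \<and> Pc n t"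
proof -
  have cpn: "coprime p n" using p pn by (simp add: prime_imp_coprime)
  have cqn: "coprime (p ^ k) n" using cpn by simp
  have p1: "p > 1" using prime_gt_1_nat[OF p] .
  have q1: "p ^ k > 1" using p1 k by (metis one_less_power not_one_le_zero gr0I)
  show ?thesis
  proof
    assume H: "Pc (p ^ k * n) t"
    have "\<not> p ^ k dvd t"
    proof
      assume "p ^ k dvd t"
      moreover have "unitary_dvd (p ^ k) (p ^ k * n)"
        using cqn p1 by (simp add: unitary_dvd_def)
      ultimately have "p ^ k = 1" using H unfolding Pc_def by blast
      thus False using q1 by linarith
    qed
    moreover have "Pc n t" unfolding Pc_def
    proof (intro allI impI)
      fix d assume d: "d dvd t \<and> unitary_dvd d n"
      then obtain e where e: "n = d * e" by (auto simp: unitary_dvd_def elim: dvdE)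
      have dpos: "d > 0" using e n by (cases d) auto
      have ce: "coprime d e" using d e dpos by (simp add: unitary_dvd_def)
      have "coprime d (p ^ k)" using cqn e by (auto simp: coprime_commute)
      hence "coprime d (p ^ k * e)" using ce by simp
      moreover have "p ^ k * n div d = p ^ k * e" using e dpos by simp
      ultimately have "unitary_dvd d (p ^ k * n)" using e by (simp add: unitary_dvd_def)
      thus "d = 1" using H d unfolding Pc_def by blast
    qed
    ultimately show "\<not> p ^ k dvd t \<and> Pc n t" by blast
  next
    assume H: "\<not> p ^ k dvd t \<and> Pc n t"
    show "Pc (p ^ k * n) t" unfolding Pc_def
    proof (intro allI impI)
      fix d assume d: "d dvd t \<and> unitary_dvd d (p ^ k * n)"
      then obtain e where e: "p ^ k * n = d * e" by (auto simp: unitary_dvd_def elim: dvdE)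
      have dpos: "d > 0" using e n p1 by (cases d) auto
      have ce: "coprime d e" using d e dpos by (simp add: unitary_dvd_def)
      show "d = 1"
      proof (cases "p dvd d")
        case True
        have "coprime p e" using ce True by (meson coprime_common_divisor coprime_def dvd_trans) 
        hence "coprime (p ^ k) e" by simp
        moreover have "p ^ k dvd d * e" using e by (metis dvd_triv_left)
        ultimately have "p ^ k dvd d" by (simp add: coprime_dvd_mult_left_iff)
        hence "p ^ k dvd t" using d by (blast intro: dvd_trans)
        with H show ?thesis by blast
      next
        case False
        have "coprime d (p ^ k)" using False p by (metis coprime_commute coprime_power_right_iff prime_imp_coprime)
        moreover have "d dvd p ^ k * n" using e by simp
        ultimately have dn: "d dvd n" by (simp add: coprime_dvd_mult_right_iff)
        then obtain f where f: "n = d * f" by (auto elim: dvdE)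
        have "e = p ^ k * f" using e f dpos by simp
        hence "coprime d f" using ce by simp
        hence "unitary_dvd d n" using f dpos by (simp add: unitary_dvd_def)
        thus ?thesis using H d unfolding Pc_def by blast
      qed
    qed
  qed
qed

lemma xq_factor:
  fixes a :: complex and q :: nat
  assumes q: "q > 0" and a: "a \<noteq> 0"
  shows "(\<Prod>s<q. [:- (a * cis (2 * pi * real s / real q)), 1:]) = monom 1 q - [:a ^ q:]"
proof -
  let ?w = "\<lambda>s::nat. cis (2 * pi * real s / real q)"
  let ?P = "\<Prod>s<q. [:- (a * ?w s), 1:]"
  have bij: "bij_betw ?w {..<q} {z. z ^ q = 1}" by (rule Complex.bij_betw_roots_unity[OF q])
  hence injw: "inj_on ?w {..<q}" by (rule bij_betw_imp_inj_on)
  have inj: "inj_on (\<lambda>s. a * ?w s) {..<q}"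
    using injw a by (auto simp: inj_on_def)
  have w1: "?w s ^ q = 1" if "s < q" for s using bij that by (auto simp: bij_betw_def)
  have degP: "degree ?P = q"
    by (subst degree_prod_eq_sum_degree) auto
  have lcP: "lead_coeff ?P = 1" by (simp add: lead_coeff_prod)
  have degM: "degree (monom 1 q - [:a ^ q:] :: complex poly) \<le> q"
    by (rule order.trans[OF degree_diff_le_max]) (simp add: degree_monom_le)
  have cM: "coeff (monom 1 q - [:a ^ q:] :: complex poly) q = 1"
    using q by (simp add: coeff_pCons split: nat.split)
  show ?thesis
  proof (rule poly_eqI_degree_lead_coeff[where n = q and A = "(\<lambda>s. a * ?w s) ` {..<q}"])
    show "coeff ?P q = coeff (monom 1 q - [:a ^ q:]) q" using lcP degP cM by simp
    show "q \<le> card ((\<lambda>s. a * ?w s) ` {..<q})" using card_image[OF inj] by simp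
    show "degree ?P \<le> q" using degP by simp
    show "degree (monom 1 q - [:a ^ q:]) \<le> q" by (rule degM)
    fix z assume "z \<in> (\<lambda>s. a * ?w s) ` {..<q}"
    then obtain s where s: "s < q" and z: "z = a * ?w s" by auto
    have "poly ?P z = 0" using s z by (auto simp: poly_prod)
    moreover have "poly (monom 1 q - [:a ^ q:]) z = 0"
      using w1[OF s] z by (simp add: poly_monom power_mult_distrib)
    ultimately show "poly ?P z = poly (monom 1 q - [:a ^ q:]) z" by simp
  qed
qed

definition Lf :: "nat \<Rightarrow> nat \<Rightarrow> complex poly" where
  "Lf m j = [:- cis (2 * pi * real j / real m), 1:]"

lemma uc_eq:
  assumes "m > 0"
  shows "unitary_cyclotomic m = (\<Prod>j\<in>{j. 1 \<le> j \<and> j \<le> m \<and> Pc m j}. Lf m j)"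
  unfolding unitary_cyclotomic_def Lf_def using bug_iff[OF assms] by simp

theorem mainTheorem8:
  fixes n k p :: nat
  assumes "n \<ge> 1" and "k \<ge> 1" and "prime p" and "\<not> p dvd n"
  shows "unitary_cyclotomic (p ^ k * n) =
           pcompose (unitary_cyclotomic n) (monom 1 (p ^ k)) div unitary_cyclotomic n"
proof -
  note asm = assms
  define q where "q = p ^ k"
  define N where "N = q * n"
  have p0: "p > 0" using asm(3) prime_gt_0_nat by blast
  have q0: "q > 0" using p0 by (simp add: q_def)
  have n0: "n > 0" using asm(1) by simp
  have N0: "N > 0" using q0 n0 by (simp add: N_def)
  have cqn: "coprime q n" unfolding q_def using asm(3,4) by (simp add: prime_imp_coprime)
  define S where "S = {j. 1 \<le> j \<and> j \<le> n \<and> Pc n j}"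
  define U where "U = {t. 1 \<le> t \<and> t \<le> N \<and> Pc n t}"
  define T where "T = {t\<in>U. \<not> q dvd t}"
  define V where "V = {t\<in>U. q dvd t}"
  have finU: "finite U" unfolding U_def by (rule finite_subset[of _ "{..N}"]) auto
  have finS: "finite S" unfolding S_def by (rule finite_subset[of _ "{..n}"]) auto
  have ucn: "unitary_cyclotomic n = (\<Prod>j\<in>S. Lf n j)" unfolding S_def by (rule uc_eq[OF n0])
  have hT: "unitary_cyclotomic N = (\<Prod>t\<in>T. Lf N t)"
  proof -
    have "{j. 1 \<le> j \<and> j \<le> N \<and> Pc N j} = T"
      unfolding T_def U_def N_def q_def using Pc_N[OF asm] by auto
    thus ?thesis using uc_eq[OF N0] by simp
  qed
  have hV: "(\<Prod>t\<in>V. Lf N t) = unitary_cyclotomic n"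
  proof -
    have Vim: "V = (\<lambda>j. q * j) ` S"
    proof
      show "V \<subseteq> (\<lambda>j. q * j) ` S"
      proof
        fix t assume "t \<in> V"
        then obtain j where t: "t = q * j" and t1: "1 \<le> t" and tN: "t \<le> N" and P: "Pc n t"
          unfolding V_def U_def by (auto elim: dvdE)
        have "1 \<le> j" using t t1 by (cases j) auto
        moreover have "j \<le> n" using t tN q0 unfolding N_def by simp
        moreover have "Pc n j" using P t Pc_mult[OF cqn] by simp
        ultimately show "t \<in> (\<lambda>j. q * j) ` S" using t unfolding S_def by auto
      qed
      show "(\<lambda>j. q * j) ` S \<subseteq> V"
        using q0 Pc_mult[OF cqn] unfolding S_def V_def U_def N_def
        by (auto simp: Suc_le_eq)
    qed
    have inj: "inj_on (\<lambda>j. q * j) S" using q0 by (auto simp: inj_on_def)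
    have L: "Lf N (q * j) = Lf n j" for j
    proof -
      have "2 * pi * real (q * j) / real N = 2 * pi * real j / real n"
        using q0 unfolding N_def by (simp add: field_simps)
      thus ?thesis by (simp add: Lf_def)
    qed
    show ?thesis unfolding Vim ucn by (simp add: prod.reindex[OF inj] L)
  qed
  have hU: "pcompose (unitary_cyclotomic n) (monom 1 q) = (\<Prod>t\<in>U. Lf N t)"
  proof -
    have step1: "pcompose (Lf n j) (monom 1 q) = (\<Prod>s<q. Lf N (j + s * n))" for j
    proof -
      define a where "a = cis (2 * pi * real j / real N)"
      have a0: "a \<noteq> 0" by (simp add: a_def)
      have aq: "a ^ q = cis (2 * pi * real j / real n)"
      proof -
        have "real q * (2 * pi * real j / real N) = 2 * pi * real j / real n"
          using q0 unfolding N_def by (simp add: field_simps)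
        thus ?thesis by (simp only: a_def Complex.DeMoivre)
      qed
      have as: "a * cis (2 * pi * real s / real q) = cis (2 * pi * real (j + s * n) / real N)" for s
      proof -
        have "2 * pi * real j / real N + 2 * pi * real s / real q = 2 * pi * real (j + s * n) / real N"
          using q0 n0 unfolding N_def by (simp add: field_simps)
        thus ?thesis by (simp add: a_def cis_mult)
      qed
      have "pcompose (Lf n j) (monom 1 q) = monom 1 q - [:a ^ q:]"
        unfolding Lf_def aq by (simp add: pcompose_pCons)
      also have "\<dots> = (\<Prod>s<q. [:- (a * cis (2 * pi * real s / real q)), 1:])"
        by (rule xq_factor[OF q0 a0, symmetric])
      also have "\<dots> = (\<Prod>s<q. Lf N (j + s * n))" by (simp add: as Lf_def)
      finally show ?thesis .
    qed
    define h where "h = (\<lambda>(j, s). j + s * n)"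
    define h' where "h' = (\<lambda>t. ((t - 1) mod n + 1, (t - 1) div n))"
    have bij: "bij_betw h (S \<times> {..<q}) U"
    proof (rule bij_betw_byWitness[where f' = h'])
      show "\<forall>x\<in>S \<times> {..<q}. h' (h x) = x"
      proof
        fix x assume "x \<in> S \<times> {..<q}"
        then obtain j s where x: "x = (j, s)" and j1: "1 \<le> j" and jn: "j \<le> n" unfolding S_def by auto
        have e: "j + s * n - 1 = (j - 1) + s * n" using j1 by simp
        have m1: "(j - 1 + s * n) mod n = j - 1" using jn j1 by (subst mod_mult_self1) simp
        have m2: "(j - 1 + s * n) div n = s" using jn j1 n0 by (subst div_mult_self1) simp_all
        have "h' (h x) = ((j - 1 + s * n) mod n + 1, (j - 1 + s * n) div n)"
          unfolding x h_def h'_def e[symmetric] by simp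
        also have "\<dots> = x" unfolding m1 m2 x using j1 by simp
        finally show "h' (h x) = x" .
      qed
      show "\<forall>t\<in>U. h (h' t) = t"
      proof
        fix t assume "t \<in> U"
        hence t1: "1 \<le> t" unfolding U_def by simp
        have "(t - 1) mod n + 1 + (t - 1) div n * n = t" using t1 by (simp add: mod_div_mult_eq)
        thus "h (h' t) = t" unfolding h_def h'_def by simp
      qed
      show "h ` (S \<times> {..<q}) \<subseteq> U"
      proof
        fix t assume "t \<in> h ` (S \<times> {..<q})"
        then obtain j s where t: "t = j + s * n" and j1: "1 \<le> j" and jn: "j \<le> n" and P: "Pc n j"
          and sq: "s < q" unfolding S_def h_def by auto
        have s1: "(s + 1) * n \<le> q * n" using sq by (intro mult_le_mono1) simp
        have "t \<le> (s + 1) * n" using t jn by simp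
        hence "t \<le> N" using s1 unfolding N_def by linarith
        moreover have "Pc n t"
        proof -
          have "t mod n = j mod n" using t by simp
          thus ?thesis using P Pc_mod[OF n0, of t] Pc_mod[OF n0, of j] by simp
        qed
        ultimately show "t \<in> U" using t j1 unfolding U_def by simp
      qed
      show "h' ` U \<subseteq> S \<times> {..<q}"
      proof
        fix x assume "x \<in> h' ` U"
        then obtain t where x: "x = h' t" and t1: "1 \<le> t" and tN: "t \<le> N" and P: "Pc n t"
          unfolding U_def by auto
        have "(t - 1) mod n < n" using n0 by simp
        moreover have "(t - 1) div n < q"
          using tN t1 n0 unfolding N_def by (simp add: less_mult_imp_div_less)
        moreover have "Pc n ((t - 1) mod n + 1)"
        proof -
          have "((t - 1) mod n + 1) mod n = t mod n" using t1 by (simp add: mod_Suc_eq)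
          thus ?thesis using P Pc_mod[OF n0, of t] Pc_mod[OF n0, of "(t - 1) mod n + 1"] by simp
        qed
        ultimately show "x \<in> S \<times> {..<q}" using x unfolding h'_def S_def by auto
      qed
    qed
    have "pcompose (unitary_cyclotomic n) (monom 1 q) = (\<Prod>j\<in>S. \<Prod>s<q. Lf N (j + s * n))"
      unfolding ucn pcompose_prod step1 by simp
    also have "\<dots> = (\<Prod>x\<in>S \<times> {..<q}. Lf N (h x))"
      unfolding h_def by (simp add: prod.cartesian_product case_prod_unfold)
    also have "\<dots> = (\<Prod>t\<in>U. Lf N t)" by (rule prod.reindex_bij_betw[OF bij])
    finally show ?thesis .
  qed
  have UTV: "(\<Prod>t\<in>U. Lf N t) = (\<Prod>t\<in>T. Lf N t) * (\<Prod>t\<in>V. Lf N t)"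
  proof -
    have "U = T \<union> V" "T \<inter> V = {}" unfolding T_def V_def by auto
    moreover have "finite T" "finite V" using finU unfolding T_def V_def by auto
    ultimately show ?thesis by (simp add: prod.union_disjoint)
  qed
  have nz: "unitary_cyclotomic n \<noteq> 0" unfolding ucn using finS by (simp add: Lf_def)
  have e1: "pcompose (unitary_cyclotomic n) (monom 1 q) = unitary_cyclotomic N * unitary_cyclotomic n"
    by (simp only: hU UTV hT hV)
  have "unitary_cyclotomic N = pcompose (unitary_cyclotomic n) (monom 1 q) div unitary_cyclotomic n"
    by (simp only: e1 nonzero_mult_div_cancel_right[OF nz])
  thus ?thesis by (simp only: q_def N_def)
qed

end
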